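(* Let $\mathcal D\subseteq\mathcal C$ be a $\le$-amalgamation class. Let $A\in\mathcal D$ and let $U$ be a finite independent subset of $A$. Let $M$ be the maximal number of common predecessors in $A$ of a $q$-element subset of $U$, and let $N\ge M$ be such that $\mathcal T_N\in\mathcal D$. Then there is $B\in\mathcal D$ with $A\le B$ such that every $q$-element subset of $U$ has at least $N$ common predecessors in $B$.
   Context: Fix an integer $q\ge2$; $T=T_q$ is the digraph whose vertices are finite sequences over $\{0,\ldots,q-1\}$ with edges $(\bar w,\bar wi)$. Subdigraphs are induced. For a digraph, an $s$-arc ($s\ge0$) from $u_0$ to $u_s$ is a sequence $u_0\ldots u_s$ with each $(u_i,u_{i+1})$ an edge and $u_{i-1}\ne u_{i+1}$ for $0<i<s$; ${\rm desc}^s(u)$ is the set of endpoints of $s$-arcs from $u$, ${\rm desc}(u)=\bigcup_{s\ge0}{\rm desc}^s(u)$, ${\rm desc}(Y)=\bigcup_{y\in Y}{\rm desc}(y)$. $A\le B$ means $A$ is a subdigraph of $B$ with ${\rm desc}_B(a)\subseteq A$ for all $a\in A$ (descendant-closed); a descendant-closed set is finitely generated if it is ${\rm desc}(Z)$ for finite $Z$. A $\le$-embedding is an embedding $f:A\to B$ with $f(A)\le B$; $\le$-embeddings $f_i:A\to B_i$ are isomorphic if $f_2=h\circ f_1$ for an isomorphism $h:B_1\to B_2$. A subset is independent if descendant sets of distinct members are disjoint. A common predecessor of a set $X$ is a vertex $a$ with $(a,x)$ an edge for all $x\in X$. $\mathcal C$ is the class of digraphs $A$ with ${\rm desc}(a)\cong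 T$ for all $a\in A$, $A$ finitely generated, and ${\rm desc}(a)\cap{\rm desc}(b)$ finitely generated for all $a,b\in A$. For $n\ge1$, $\mathcal T_n$ is the member of $\mathcal C$ generated by $n$ vertices $x_1,\ldots,x_n$ with ${\rm desc}^1(x_i)={\rm desc}^1(x_j)$ for all $i,j$ ($\mathcal T_1=T$). A $\le$-amalgamation class is a class $\mathcal D$ of digraphs which (1) consists of countable finitely generated digraphs, is closed under isomorphism and has countably many isomorphism types; (2) is closed under finitely generated descendant-closed subdigraphs; (3) has the $\le$-amalgamation property: for $A,B_1,B_2\in\mathcal D$ and $\le$-embeddings $f_i:A\to B_i$ there are $C\in\mathcal D$ and $\le$-embeddings $g_i:B_i\to C$ with $g_1\circ f_1=g_2\circ f_2$; (4) for all $A,B\in\mathcal D$ has only countably many isomorphism types of $\le$-embeddings $A\to B$. *)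

theory Defs
  imports Main "HOL-Library.Countable_Set"
begin

type_synonym 'a digraph = "'a set \<times> ('a \<times> 'a) set"

definition verts :: "'a digraph \<Rightarrow> 'a set" where "verts G = fst G"
definition edges :: "'a digraph \<Rightarrow> ('a \<times> 'a) set" where "edges G = snd G"

definition wf_digraph :: "'a digraph \<Rightarrow> bool" where
  "wf_digraph G \<longleftrightarrow> edges G \<subseteq> verts G \<times> verts G"

definition induced :: "'a digraph \<Rightarrow> 'a set \<Rightarrow> 'a digraph" where
  "induced G X = (X, edges G \<inter> (X \<times> X))"

definition iso_map :: "'a digraph \<Rightarrow> 'b digraph \<Rightarrow> ('a \<Rightarrow> 'b) \<Rightarrow> bool" where
  "iso_map G H h \<longleftrightarrow> bij_betw h (verts G) (verts H) \<and>
     (\<forall>x\<in>verts G. \<forall>y\<in>verts G. (x, y) \<in> edges G \<longleftrightarrow> (h x, h y) \<in> edges H)"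

definition isomorphic :: "'a digraph \<Rightarrow> 'b digraph \<Rightarrow> bool" where
  "isomorphic G H \<longleftrightarrow> (\<exists>h. iso_map G H h)"

text \<open>An s-arc u_0 ... u_s is a list of length s+1.\<close>
definition is_arc :: "'a digraph \<Rightarrow> 'a list \<Rightarrow> bool" where
  "is_arc G xs \<longleftrightarrow> xs \<noteq> [] \<and> set xs \<subseteq> verts G \<and>
     (\<forall>i. i + 1 < length xs \<longrightarrow> (xs ! i, xs ! (i + 1)) \<in> edges G) \<and>
     (\<forall>i. 0 < i \<and> i + 1 < length xs \<longrightarrow> xs ! (i - 1) \<noteq> xs ! (i + 1))"

definition desc_n :: "'a digraph \<Rightarrow> nat \<Rightarrow> 'a \<Rightarrow> 'a set" where
  "desc_n G s u = {last xs | xs. is_arc G xs \<and> hd xs = u \<and> length xs = Suc s}"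

definition desc :: "'a digraph \<Rightarrow> 'a \<Rightarrow> 'a set" where
  "desc G u = (\<Union>s. desc_n G s u)"

definition desc_set :: "'a digraph \<Rightarrow> 'a set \<Rightarrow> 'a set" where
  "desc_set G Y = (\<Union>y\<in>Y. desc G y)"

definition desc_closed :: "'a digraph \<Rightarrow> 'a set \<Rightarrow> bool" where
  "desc_closed G X \<longleftrightarrow> X \<subseteq> verts G \<and> (\<forall>x\<in>X. desc G x \<subseteq> X)"

definition le_sub :: "'a digraph \<Rightarrow> 'a digraph \<Rightarrow> bool" where
  "le_sub A B \<longleftrightarrow> verts A \<subseteq> verts B \<and> edges A = edges B \<inter> (verts A \<times> verts A) \<and>
     (\<forall>a\<in>verts A. desc B a \<subseteq> verts A)"

definition fin_generated :: "'a digraph \<Rightarrow> bool" where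
  "fin_generated G \<longleftrightarrow> (\<exists>Z. finite Z \<and> Z \<subseteq> verts G \<and> desc_set G Z = verts G)"

definition embedding :: "'a digraph \<Rightarrow> 'b digraph \<Rightarrow> ('a \<Rightarrow> 'b) \<Rightarrow> bool" where
  "embedding A B f \<longleftrightarrow> inj_on f (verts A) \<and> f ` verts A \<subseteq> verts B \<and>
     (\<forall>x\<in>verts A. \<forall>y\<in>verts A. (x, y) \<in> edges A \<longleftrightarrow> (f x, f y) \<in> edges B)"

definition le_embedding :: "'a digraph \<Rightarrow> 'b digraph \<Rightarrow> ('a \<Rightarrow> 'b) \<Rightarrow> bool" where
  "le_embedding A B f \<longleftrightarrow> embedding A B f \<and> desc_closed B (f ` verts A)"

definition emb_isomorphic :: "'a digraph \<Rightarrow> 'b digraph \<Rightarrow> ('a \<Rightarrow> 'b) \<Rightarrow> ('a \<Rightarrow> 'b) \<Rightarrow> bool" where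
  "emb_isomorphic A B f g \<longleftrightarrow> (\<exists>h. iso_map B B h \<and> (\<forall>x\<in>verts A. g x = h (f x)))"

definition T_q :: "nat \<Rightarrow> nat list digraph" where
  "T_q q = ({w. set w \<subseteq> {..<q}}, {(w, w @ [i]) | w i. set w \<subseteq> {..<q} \<and> i < q})"

definition in_C :: "nat \<Rightarrow> 'a digraph \<Rightarrow> bool" where
  "in_C q G \<longleftrightarrow> wf_digraph G \<and>
     (\<forall>a\<in>verts G. isomorphic (induced G (desc G a)) (T_q q)) \<and>
     fin_generated G \<and>
     (\<forall>a\<in>verts G. \<forall>b\<in>verts G. \<exists>Z. finite Z \<and> Z \<subseteq> verts G \<and>
         desc G a \<inter> desc G b = desc_set G Z)"

definition is_T_n :: "nat \<Rightarrow> nat \<Rightarrow> 'a digraph \<Rightarrow> bool" where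
  "is_T_n q n G \<longleftrightarrow> n \<ge> 1 \<and> in_C q G \<and>
     (\<exists>xs. length xs = n \<and> distinct xs \<and> set xs \<subseteq> verts G \<and>
        desc_set G (set xs) = verts G \<and>
        (\<forall>i<n. \<forall>j<n. desc_n G 1 (xs ! i) = desc_n G 1 (xs ! j)))"

text \<open>All digraphs in the class are countable, so we take them on vertex type nat.\<close>
definition le_amalgamation_class :: "nat digraph set \<Rightarrow> bool" where
  "le_amalgamation_class D \<longleftrightarrow>
     \<comment> \<open>(1)\<close>
     (\<forall>G\<in>D. wf_digraph G \<and> fin_generated G) \<and>
     (\<forall>G\<in>D. \<forall>H :: nat digraph. wf_digraph H \<and> isomorphic G H \<longrightarrow> H \<in> D) \<and>
     (\<exists>S. countable S \<and> S \<subseteq> D \<and> (\<forall>G\<in>D. \<exists>H\<in>S. isomorphic G H)) \<and>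
     \<comment> \<open>(2)\<close>
     (\<forall>G\<in>D. \<forall>Z. finite Z \<and> Z \<subseteq> verts G \<longrightarrow> induced G (desc_set G Z) \<in> D) \<and>
     \<comment> \<open>(3)\<close>
     (\<forall>A\<in>D. \<forall>B1\<in>D. \<forall>B2\<in>D. \<forall>f1 f2.
        le_embedding A B1 f1 \<and> le_embedding A B2 f2 \<longrightarrow>
        (\<exists>C\<in>D. \<exists>g1 g2. le_embedding B1 C g1 \<and> le_embedding B2 C g2 \<and>
            (\<forall>x\<in>verts A. g1 (f1 x) = g2 (f2 x)))) \<and>
     \<comment> \<open>(4)\<close>
     (\<forall>A\<in>D. \<forall>B\<in>D. \<exists>F. countable F \<and> (\<forall>g\<in>F. le_embedding A B g) \<and>
        (\<forall>f. le_embedding A B f \<longrightarrow> (\<exists>g\<in>F. emb_isomorphic A B f g)))"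

definition independent :: "'a digraph \<Rightarrow> 'a set \<Rightarrow> bool" where
  "independent G U \<longleftrightarrow> U \<subseteq> verts G \<and>
     (\<forall>u\<in>U. \<forall>v\<in>U. u \<noteq> v \<longrightarrow> desc G u \<inter> desc G v = {})"

definition common_preds :: "'a digraph \<Rightarrow> 'a set \<Rightarrow> 'a set" where
  "common_preds G X = {a \<in> verts G. \<forall>x\<in>X. (a, x) \<in> edges G}"

end

theory Submission
  imports Defs
begin


abbreviation EE :: "'a digraph \<Rightarrow> ('a \<times> 'a) set" where
  "EE G \<equiv> edges G \<inter> (verts G \<times> verts G)"

lemma arc_take: "is_arc G xs \<Longrightarrow> 0 < n \<Longrightarrow> is_arc G (take n xs)"
  unfolding is_arc_def
  by (auto dest: in_set_takeD)

lemma arc_reach: "is_arc G xs \<Longrightarrow> i < length xs \<Longrightarrow> (hd xs, xs!i) \<in> (EE G)\<^sup>*"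
proof (induction i)
  case 0
  then show ?case by (simp add: hd_conv_nth is_arc_def)
next
  case (Suc i)
  then have "(xs!i, xs!Suc i) \<in> edges G" "xs!i \<in> verts G" "xs ! Suc i \<in> verts G"
    unfolding is_arc_def by (auto dest: nth_mem)
  then have "(xs!i, xs!Suc i) \<in> EE G" by simp
  moreover have "(hd xs, xs!i) \<in> (EE G)\<^sup>*" using Suc by simp
  ultimately show ?case by (meson rtrancl_into_rtrancl)
qed

lemma desc_sub: "desc G x \<subseteq> {y. (x,y) \<in> (EE G)\<^sup>*}"
proof
  fix y assume "y \<in> desc G x"
  then obtain xs where xs: "is_arc G xs" "hd xs = x" "last xs = y"
    unfolding desc_def desc_n_def by auto
  then have "xs \<noteq> []" by (simp add: is_arc_def)
  then have "last xs = xs ! (length xs - 1)" by (simp add: last_conv_nth)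
  with arc_reach[OF xs(1), of "length xs - 1"] xs \<open>xs \<noteq> []\<close> show "y \<in> {y. (x,y) \<in> (EE G)\<^sup>*}" by auto
qed

lemma desc_verts: "y \<in> desc G x \<Longrightarrow> x \<in> verts G \<and> y \<in> verts G"
proof -
  assume "y \<in> desc G x"
  then obtain xs where xs: "is_arc G xs" "hd xs = x" "last xs = y"
    unfolding desc_def desc_n_def by auto
  then show ?thesis unfolding is_arc_def by auto
qed

lemma arc_in_desc: "is_arc G xs \<Longrightarrow> v \<in> set xs \<Longrightarrow> v \<in> desc G (hd xs)"
proof -
  assume a: "is_arc G xs" "v \<in> set xs"
  then obtain i where i: "i < length xs" "xs ! i = v" by (auto simp: in_set_conv_nth)
  have "is_arc G (take (Suc i) xs)" using arc_take[OF a(1)] by simp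
  moreover have "hd (take (Suc i) xs) = hd xs" using i by (cases xs) auto
  moreover have "last (take (Suc i) xs) = v" using i by (simp add: take_Suc_conv_app_nth)
  moreover have "length (take (Suc i) xs) = Suc i" using i by simp
  ultimately show ?thesis unfolding desc_def desc_n_def by blast
qed

lemma arc_snoc:
  assumes "is_arc G xs" "(last xs, z) \<in> EE G"
    "\<not> (2 \<le> length xs \<and> xs ! (length xs - 2) = z)"
  shows "is_arc G (xs @ [z])"
proof -
  have ne: "xs \<noteq> []" using assms(1) by (simp add: is_arc_def)
  have l: "last xs = xs ! (length xs - 1)" using ne by (simp add: last_conv_nth)
  show ?thesis unfolding is_arc_def
  proof (intro conjI allI impI)
    show "xs @ [z] \<noteq> []" by simp
    show "set (xs @ [z]) \<subseteq> verts G" using assms(1,2) by (auto simp: is_arc_def)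
  next
    fix i assume i: "i + 1 < length (xs @ [z])"
    show "((xs @ [z]) ! i, (xs @ [z]) ! (i + 1)) \<in> edges G"
    proof (cases "i + 1 < length xs")
      case True then show ?thesis using assms(1) by (simp add: nth_append is_arc_def)
    next
      case False then have "i = length xs - 1" using i by simp
      then show ?thesis using assms(2) ne l by (simp add: nth_append)
    qed
  next
    fix i assume i: "0 < i \<and> i + 1 < length (xs @ [z])"
    show "(xs @ [z]) ! (i - 1) \<noteq> (xs @ [z]) ! (i + 1)"
    proof (cases "i + 1 < length xs")
      case True then show ?thesis using assms(1) i by (auto simp: nth_append is_arc_def)
    next
      case False then have "i = length xs - 1" using i by auto
      moreover have "length xs - 1 - 1 = length xs - 2" by simp
      ultimately show ?thesis using assms(3) i ne by (auto simp: nth_append)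
    qed
  qed
qed

lemma reach_desc: assumes "x \<in> verts G" "(x,y) \<in> (EE G)\<^sup>*" shows "y \<in> desc G x"
  using assms(2) proof (induction rule: rtrancl_induct)
  case base
  have "is_arc G [x]" using assms by (simp add: is_arc_def)
  then show ?case unfolding desc_def desc_n_def by force
next
  case (step y z)
  then obtain xs where xs: "is_arc G xs" "hd xs = x" "last xs = y"
    unfolding desc_def desc_n_def by auto
  show ?case
  proof (cases "2 \<le> length xs \<and> xs ! (length xs - 2) = z")
    case True
    then have "length xs - 2 < length xs" by auto
    then have "z \<in> set xs" using True by (metis nth_mem)
    then show ?thesis using arc_in_desc[OF xs(1)] xs(2) by auto
  next
    case False
    then have a: "is_arc G (xs @ [z])" using arc_snoc[OF xs(1)] xs(3) step by auto
    then show ?thesis using arc_in_desc[OF a, of z] xs(1) xs(2)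
      by (auto simp: is_arc_def)
  qed
qed

lemma desc_eq: assumes "x \<in> verts G" shows "desc G x = {y. (x,y) \<in> (EE G)\<^sup>*}"
proof (rule equalityI)
  show "desc G x \<subseteq> {y. (x,y) \<in> (EE G)\<^sup>*}" by (rule desc_sub)
  show "{y. (x,y) \<in> (EE G)\<^sup>*} \<subseteq> desc G x" using reach_desc[OF assms] by (simp add: subset_iff)
qed

lemma desc_self: "x \<in> verts G \<Longrightarrow> x \<in> desc G x"
  using reach_desc[of x G x] by simp

lemma desc_trans: assumes "y \<in> desc G x" "z \<in> desc G y" shows "z \<in> desc G x"
proof -
  have x: "x \<in> verts G" using desc_verts[OF assms(1)] by simp
  have "(x,y) \<in> (EE G)\<^sup>*" using subsetD[OF desc_sub assms(1)] by simp
  moreover have "(y,z) \<in> (EE G)\<^sup>*" using subsetD[OF desc_sub assms(2)] by simp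
  ultimately have "(x,z) \<in> (EE G)\<^sup>*" by (rule rtrancl_trans)
  then show ?thesis using reach_desc[OF x] by simp
qed

lemma desc_step: assumes "y \<in> desc G x" "(y,z) \<in> edges G" "z \<in> verts G" shows "z \<in> desc G x"
proof -
  have x: "x \<in> verts G" "y \<in> verts G" using desc_verts[OF assms(1)] by simp_all
  have "(x,y) \<in> (EE G)\<^sup>*" using subsetD[OF desc_sub assms(1)] by simp
  moreover have "(y,z) \<in> EE G" using assms x by simp
  ultimately have "(x,z) \<in> (EE G)\<^sup>*" by (rule rtrancl_into_rtrancl)
  then show ?thesis using reach_desc[OF x(1)] by simp
qed



lemma emb_desc:
  assumes "le_embedding B C g" "b \<in> verts B"
  shows "desc C (g b) = g ` desc B b"
proof -
  have emb: "inj_on g (verts B)" "g ` verts B \<subseteq> verts C"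
    "\<And>x y. x\<in>verts B \<Longrightarrow> y\<in>verts B \<Longrightarrow> (x, y) \<in> edges B \<longleftrightarrow> (g x, g y) \<in> edges C"
    "desc_closed C (g ` verts B)"
    using assms(1) unfolding le_embedding_def embedding_def by auto
  have gb: "g b \<in> verts C" using emb(2) assms(2) by auto
  have A: "g ` desc B b \<subseteq> desc C (g b)"
  proof
    fix z assume "z \<in> g ` desc B b"
    then obtain w where w: "w \<in> desc B b" "z = g w" by auto
    have "(b, w) \<in> (EE B)\<^sup>*" using subsetD[OF desc_sub w(1)] by simp
    then have "(g b, g w) \<in> (EE C)\<^sup>*"
    proof (induction rule: rtrancl_induct)
      case base then show ?case by simp
    next
      case (step u v)
      then have uv: "u \<in> verts B" "v \<in> verts B" "(u,v) \<in> edges B" by auto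
      then have "(g u, g v) \<in> EE C" using emb(2,3) by auto
      with step(3) show ?case by (rule rtrancl_into_rtrancl)
    qed
    then show "z \<in> desc C (g b)" using w(2) reach_desc[OF gb] by simp
  qed
  have Bq: "desc C (g b) \<subseteq> g ` desc B b"
  proof
    fix z assume "z \<in> desc C (g b)"
    then have "(g b, z) \<in> (EE C)\<^sup>*" using subsetD[OF desc_sub] by simp
    then show "z \<in> g ` desc B b"
    proof (induction rule: rtrancl_induct)
      case base then show ?case using desc_self[OF assms(2)] by simp
    next
      case (step z z')
      then obtain w where w: "w \<in> desc B b" "z = g w" by auto
      have wv: "w \<in> verts B" using desc_verts[OF w(1)] by simp
      have gw: "g w \<in> verts C" using emb(2) wv by auto
      have e: "(g w, z') \<in> edges C" "z' \<in> verts C" using step(2) w(2) by auto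
      have "z' \<in> desc C (g w)" using desc_step[OF desc_self[OF gw] e] .
      moreover have "desc C (g w) \<subseteq> g ` verts B" using emb(4) wv
        unfolding desc_closed_def by auto
      ultimately obtain w' where w': "w' \<in> verts B" "z' = g w'" by auto
      have "(w, w') \<in> edges B" using emb(3)[OF wv w'(1)] e(1) w' by simp
      then have "w' \<in> desc B b" using desc_step[OF w(1) _ w'(1)] by simp
      then show ?case using w' by auto
    qed
  qed
  show ?thesis using equalityI[OF Bq A] .
qed

lemma desc_sub_verts: "desc G a \<subseteq> verts G"
proof
  fix x assume "x \<in> desc G a" then show "x \<in> verts G" using desc_verts[of x G a] by simp
qed

lemma iso_le_emb: assumes "iso_map H H' h" shows "le_embedding H H' h"
proof -
  have b: "bij_betw h (verts H) (verts H')" using assms unfolding iso_map_def by simp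
  have e: "\<forall>x\<in>verts H. \<forall>y\<in>verts H. (x, y) \<in> edges H \<longleftrightarrow> (h x, h y) \<in> edges H'"
    using assms unfolding iso_map_def by simp
  have im: "h ` verts H = verts H'" using b by (simp add: bij_betw_def)
  have "embedding H H' h" unfolding embedding_def using b e im by (simp add: bij_betw_def)
  moreover have "desc_closed H' (h ` verts H)" unfolding desc_closed_def im
    by (simp add: desc_sub_verts)
  ultimately show ?thesis unfolding le_embedding_def by simp
qed

lemma desc_closed_desc: "a \<in> verts G \<Longrightarrow> desc_closed G (desc G a)"
  unfolding desc_closed_def
proof (intro conjI ballI)
  show "desc G a \<subseteq> verts G" by (rule desc_sub_verts)
  fix x assume x: "x \<in> desc G a"
  show "desc G x \<subseteq> desc G a"
  proof
    fix y assume "y \<in> desc G x" then show "y \<in> desc G a" using desc_trans[OF x] by simp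
  qed
qed

lemma desc_closed_desc_set: "Z \<subseteq> verts G \<Longrightarrow> desc_closed G (desc_set G Z)"
  unfolding desc_closed_def
proof (intro conjI ballI)
  show "desc_set G Z \<subseteq> verts G" unfolding desc_set_def by (simp add: UN_least desc_sub_verts)
  fix x assume "x \<in> desc_set G Z"
  then obtain z where z: "z \<in> Z" "x \<in> desc G z" unfolding desc_set_def by auto
  show "desc G x \<subseteq> desc_set G Z"
  proof
    fix y assume "y \<in> desc G x" then have "y \<in> desc G z" using desc_trans[OF z(2)] by simp
    then show "y \<in> desc_set G Z" using z(1) unfolding desc_set_def by auto
  qed
qed

lemma incl_le_emb: "desc_closed G X \<Longrightarrow> le_embedding (induced G X) G id"
  unfolding le_embedding_def embedding_def induced_def verts_def edges_def desc_closed_def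
  by auto

lemma desc_induced: assumes "desc_closed G X" "x \<in> X" shows "desc (induced G X) x = desc G x"
proof -
  have "x \<in> verts (induced G X)" using assms(2) by (simp add: induced_def verts_def)
  from emb_desc[OF incl_le_emb[OF assms(1)] this] show ?thesis by simp
qed

lemma le_emb_comp:
  assumes "le_embedding A B f" "le_embedding B C g"
  shows "le_embedding A C (g \<circ> f)"
proof -
  have f: "inj_on f (verts A)" "f ` verts A \<subseteq> verts B"
    "\<forall>x\<in>verts A. \<forall>y\<in>verts A. (x, y) \<in> edges A \<longleftrightarrow> (f x, f y) \<in> edges B"
    "desc_closed B (f ` verts A)"
    using assms(1) unfolding le_embedding_def embedding_def by auto
  have g: "inj_on g (verts B)" "g ` verts B \<subseteq> verts C"
    "\<forall>x\<in>verts B. \<forall>y\<in>verts B. (x, y) \<in> edges B \<longleftrightarrow> (g x, g y) \<in> edges C"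
    using assms(2) unfolding le_embedding_def embedding_def by auto
  have "embedding A C (g \<circ> f)" unfolding embedding_def
  proof (intro conjI ballI)
    show "inj_on (g \<circ> f) (verts A)" using f(1) inj_on_subset[OF g(1) f(2)] by (rule comp_inj_on)
    show "(g \<circ> f) ` verts A \<subseteq> verts C" using f(2) g(2) by (auto simp: image_subset_iff)
    fix x y assume xy: "x \<in> verts A" "y \<in> verts A"
    then have "f x \<in> verts B" "f y \<in> verts B" using f(2) by auto
    then show "(x, y) \<in> edges A \<longleftrightarrow> ((g \<circ> f) x, (g \<circ> f) y) \<in> edges C"
      using f(3) g(3) xy by simp
  qed
  moreover have "desc_closed C ((g \<circ> f) ` verts A)"
    unfolding desc_closed_def
  proof (intro conjI ballI)
    show "(g \<circ> f) ` verts A \<subseteq> verts C" using f(2) g(2) by (auto simp: image_subset_iff)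
  next
    fix x assume "x \<in> (g \<circ> f) ` verts A"
    then obtain a where a: "a \<in> verts A" "x = g (f a)" by auto
    have "desc C x = g ` desc B (f a)" using emb_desc[OF assms(2)] a f(2) by auto
    also have "\<dots> \<subseteq> g ` f ` verts A"
    proof (rule image_mono)
      show "desc B (f a) \<subseteq> f ` verts A" using f(4) a(1) unfolding desc_closed_def by simp
    qed
    finally show "desc C x \<subseteq> (g \<circ> f) ` verts A" by auto
  qed
  ultimately show ?thesis unfolding le_embedding_def by simp
qed

lemma le_emb_id: "le_embedding A A id"
  unfolding le_embedding_def embedding_def desc_closed_def by (simp add: desc_sub_verts)

lemma T_edges: "edges (T_q q) = {(w, w @ [i]) | w i. set w \<subseteq> {..<q} \<and> i < q}"
  by (simp add: T_q_def edges_def)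

lemma T_verts: "verts (T_q q) = {w. set w \<subseteq> {..<q}}"
  by (simp add: T_q_def verts_def)

lemma T_reach: "(u, v) \<in> (EE (T_q q))\<^sup>* \<Longrightarrow> \<exists>w. v = u @ w"
proof (induction rule: rtrancl_induct)
  case base then show ?case by auto
next
  case (step y z) then show ?case by (auto simp: T_edges)
qed

lemma iso_root:
  assumes "iso_map (induced G (desc G a)) (T_q q) h" "a \<in> verts G"
  shows "h a = []"
proof -
  let ?H = "induced G (desc G a)"
  have dc: "desc_closed G (desc G a)" using desc_closed_desc assms(2) .
  have aa: "a \<in> desc G a" using desc_self assms(2) .
  have "desc ?H a = desc G a" using desc_induced[OF dc aa] .
  moreover have "desc (T_q q) (h a) = h ` desc ?H a"
    using emb_desc[OF iso_le_emb[OF assms(1)]] aa by (simp add: induced_def verts_def)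
  moreover have "h ` desc G a = verts (T_q q)" using assms(1)
    unfolding iso_map_def bij_betw_def by (simp add: induced_def verts_def)
  ultimately have "[] \<in> desc (T_q q) (h a)" by (simp add: T_verts)
  then have "(h a, []) \<in> (EE (T_q q))\<^sup>*" using subsetD[OF desc_sub] by simp
  then obtain w where "[] = h a @ w" using T_reach by blast
  then show ?thesis by simp
qed

lemma desc_n1: "x \<in> verts G \<Longrightarrow> desc_n G 1 x = {y \<in> verts G. (x, y) \<in> edges G}"
proof
  assume x: "x \<in> verts G"
  show "desc_n G 1 x \<subseteq> {y \<in> verts G. (x, y) \<in> edges G}"
  proof
    fix y assume "y \<in> desc_n G 1 x"
    then obtain xs where xs: "is_arc G xs" "hd xs = x" "length xs = 2" "last xs = y"
      unfolding desc_n_def by auto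
    then obtain u v where "xs = [u, v]"
      by (metis (no_types, lifting) One_nat_def Suc_1 length_0_conv length_Suc_conv)
    then show "y \<in> {y \<in> verts G. (x, y) \<in> edges G}" using xs
      unfolding is_arc_def by (auto dest: spec[of _ 0])
  qed
next
  assume x: "x \<in> verts G"
  show "{y \<in> verts G. (x, y) \<in> edges G} \<subseteq> desc_n G 1 x"
  proof
    fix y assume y: "y \<in> {y \<in> verts G. (x, y) \<in> edges G}"
    have "is_arc G [x, y]" using x y unfolding is_arc_def
      by (auto simp: less_Suc_eq nth_Cons split: nat.splits)
    then show "y \<in> desc_n G 1 x" unfolding desc_n_def by force
  qed
qed



lemma iso_facts:
  assumes "iso_map (induced G (desc G a)) (T_q q) h"
  shows "bij_betw h (desc G a) (verts (T_q q))"
    "\<And>x y. x \<in> desc G a \<Longrightarrow> y \<in> desc G a \<Longrightarrow> (x, y) \<in> edges G \<longleftrightarrow> (h x, h y) \<in> edges (T_q q)"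
  using assms unfolding iso_map_def by (auto simp: induced_def verts_def edges_def)

lemma iso_desc:
  assumes "iso_map (induced G (desc G a)) (T_q q) h" "a \<in> verts G" "k \<in> desc G a"
  shows "h ` desc G k = desc (T_q q) (h k)"
proof -
  have dc: "desc_closed G (desc G a)" using desc_closed_desc assms(2) .
  have "desc (induced G (desc G a)) k = desc G k" using desc_induced[OF dc assms(3)] .
  moreover have "desc (T_q q) (h k) = h ` desc (induced G (desc G a)) k"
    using emb_desc[OF iso_le_emb[OF assms(1)]] assms(3) by (simp add: induced_def verts_def)
  ultimately show ?thesis by simp
qed

lemma children_props:
  assumes iso: "iso_map (induced G (desc G a)) (T_q q) h" and a: "a \<in> verts G"
  defines "K \<equiv> {y \<in> verts G. (a, y) \<in> edges G}"
  shows "finite K" "card K = q" "K \<subseteq> desc G a"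
    "\<forall>k\<in>K. \<forall>k'\<in>K. k \<noteq> k' \<longrightarrow> desc G k \<inter> desc G k' = {}"
proof -
  note bij = iso_facts(1)[OF iso] and ed = iso_facts(2)[OF iso]
  have ha: "h a = []" using iso_root[OF iso a] .
  have aX: "a \<in> desc G a" using desc_self a .
  show KX: "K \<subseteq> desc G a" unfolding K_def
  proof
    fix y assume "y \<in> {y \<in> verts G. (a, y) \<in> edges G}"
    then show "y \<in> desc G a" using desc_step[OF aX] by simp
  qed
  have inj: "inj_on h (desc G a)" using bij by (simp add: bij_betw_def)
  have hK: "h ` K = (\<lambda>i. [i]) ` {..<q}"
  proof
    show "h ` K \<subseteq> (\<lambda>i. [i]) ` {..<q}"
    proof
      fix z assume "z \<in> h ` K"
      then obtain y where y: "y \<in> K" "z = h y" by auto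
      then have "(h a, h y) \<in> edges (T_q q)" using ed[OF aX] KX unfolding K_def by auto
      then show "z \<in> (\<lambda>i. [i]) ` {..<q}" using ha y by (auto simp: T_edges)
    qed
  next
    show "(\<lambda>i. [i]) ` {..<q} \<subseteq> h ` K"
    proof
      fix z assume "z \<in> (\<lambda>i. [i]) ` {..<q}"
      then obtain i where i: "i < q" "z = [i]" by auto
      then have "z \<in> verts (T_q q)" by (simp add: T_verts)
      then obtain y where y: "y \<in> desc G a" "h y = z" using bij
        by (metis bij_betw_def imageE)
      have "(h a, h y) \<in> edges (T_q q)" using ha y i by (auto simp: T_edges)
      then have "(a, y) \<in> edges G" using ed[OF aX y(1)] by simp
      moreover have "y \<in> verts G" using desc_verts[OF y(1)] by simp
      ultimately show "z \<in> h ` K" unfolding K_def using y by auto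
    qed
  qed
  have injK: "inj_on h K" using inj_on_subset[OF inj KX] .
  have fin: "finite (h ` K)" using hK by simp
  show "finite K" using finite_imageD[OF fin injK] .
  have "card K = card (h ` K)" using card_image[OF injK] by simp
  also have "\<dots> = q" using hK by (simp add: card_image inj_on_def)
  finally show "card K = q" .
  show "\<forall>k\<in>K. \<forall>k'\<in>K. k \<noteq> k' \<longrightarrow> desc G k \<inter> desc G k' = {}"
  proof (intro ballI impI)
    fix k k' assume kk: "k \<in> K" "k' \<in> K" "k \<noteq> k'"
    obtain i where i: "h k = [i]" using hK kk(1) by auto
    obtain j where j: "h k' = [j]" using hK kk(2) by auto
    have "k \<in> desc G a" "k' \<in> desc G a" using KX kk by auto
    then have "h k \<noteq> h k'" using inj kk(3) unfolding inj_on_def by blast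
    then have "i \<noteq> j" using i j by simp
    show "desc G k \<inter> desc G k' = {}"
    proof (rule ccontr)
      assume "desc G k \<inter> desc G k' \<noteq> {}"
      then obtain v where v: "v \<in> desc G k" "v \<in> desc G k'" by auto
      have "h v \<in> h ` desc G k" using v(1) by simp
      then have "h v \<in> desc (T_q q) [i]" using iso_desc[OF iso a \<open>k \<in> desc G a\<close>] i by simp
      then have "([i], h v) \<in> (EE (T_q q))\<^sup>*" using subsetD[OF desc_sub] by simp
      then obtain w where w: "h v = [i] @ w" using T_reach by blast
      have "h v \<in> h ` desc G k'" using v(2) by simp
      then have "h v \<in> desc (T_q q) [j]" using iso_desc[OF iso a \<open>k' \<in> desc G a\<close>] j by simp
      then have "([j], h v) \<in> (EE (T_q q))\<^sup>*" using subsetD[OF desc_sub] by simp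
      then obtain w' where "h v = [j] @ w'" using T_reach by blast
      moreover note w
      ultimately show False using \<open>i \<noteq> j\<close> by simp
    qed
  qed
qed



lemma glue:
  assumes wfG: "wf_digraph G" and wfB: "wf_digraph B"
    and KG: "K \<subseteq> verts G" and disjK: "\<forall>k\<in>K. \<forall>k'\<in>K. k \<noteq> k' \<longrightarrow> desc G k \<inter> desc G k' = {}"
    and SB: "S \<subseteq> verts B" and disjS: "\<forall>k\<in>S. \<forall>k'\<in>S. k \<noteq> k' \<longrightarrow> desc B k \<inter> desc B k' = {}"
    and bij: "bij_betw \<beta> K S"
    and pbij: "\<forall>k\<in>K. bij_betw (\<phi> k) (desc G k) (desc B (\<beta> k))"
    and proot: "\<forall>k\<in>K. \<phi> k k = \<beta> k"
    and ped: "\<forall>k\<in>K. \<forall>x\<in>desc G k. \<forall>y\<in>desc G k. (x, y) \<in> edges G \<longleftrightarrow> (\<phi> k x, \<phi> k y) \<in> edges B"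
  shows "\<exists>e. le_embedding (induced G (desc_set G K)) B e \<and> (\<forall>k\<in>K. e k = \<beta> k)"
proof -
  define kof where "kof v = (THE k. k \<in> K \<and> v \<in> desc G k)" for v
  define e where "e v = \<phi> (kof v) v" for v
  have kof: "kof v = k" if kv: "k \<in> K" "v \<in> desc G k" for k v
    unfolding kof_def
  proof (rule the_equality)
    show "k \<in> K \<and> v \<in> desc G k" using kv by simp
    fix k' assume k': "k' \<in> K \<and> v \<in> desc G k'"
    show "k' = k"
    proof (rule ccontr)
      assume "k' \<noteq> k"
      then have "desc G k' \<inter> desc G k = {}" using disjK k' kv(1) by simp
      then show False using k' kv(2) by auto
    qed
  qed
  have eq: "e v = \<phi> k v" if "k \<in> K" "v \<in> desc G k" for k v
    using kof[OF that] e_def by simp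
  have emem: "e v \<in> desc B (\<beta> k)" if kv: "k \<in> K" "v \<in> desc G k" for k v
  proof -
    have "bij_betw (\<phi> k) (desc G k) (desc B (\<beta> k))" using pbij kv(1) by simp
    then have "\<phi> k v \<in> desc B (\<beta> k)" using kv(2) by (rule bij_betw_apply)
    then show ?thesis using eq[OF kv] by simp
  qed
  have binj: "inj_on \<beta> K" using bij by (simp add: bij_betw_def)
  have bS: "\<beta> k \<in> S" if "k \<in> K" for k using bij_betw_apply[OF bij that] .
  have same: "k = k'" if kk: "k \<in> K" "k' \<in> K" "z \<in> desc B (\<beta> k)" "z \<in> desc B (\<beta> k')" for k k' z
  proof (rule ccontr)
    assume "k \<noteq> k'"
    then have "\<beta> k \<noteq> \<beta> k'" using binj kk(1,2) unfolding inj_on_def by auto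
    then have "desc B (\<beta> k) \<inter> desc B (\<beta> k') = {}" using disjS bS[OF kk(1)] bS[OF kk(2)] by simp
    then show False using kk(3,4) by auto
  qed
  have V: "verts (induced G (desc_set G K)) = (\<Union>k\<in>K. desc G k)"
    by (simp add: induced_def verts_def desc_set_def)
  have E: "edges (induced G (desc_set G K)) = edges G \<inter> (desc_set G K \<times> desc_set G K)"
    by (simp add: induced_def edges_def)
  have emb: "embedding (induced G (desc_set G K)) B e"
    unfolding embedding_def
  proof (intro conjI ballI)
    show "inj_on e (verts (induced G (desc_set G K)))"
    proof (rule inj_onI)
      fix v w assume v: "v \<in> verts (induced G (desc_set G K))" and w: "w \<in> verts (induced G (desc_set G K))"
        and ev: "e v = e w"
      obtain k where k: "k \<in> K" "v \<in> desc G k" using v V by auto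
      obtain k' where k': "k' \<in> K" "w \<in> desc G k'" using w V by auto
      have "e w \<in> desc B (\<beta> k)" using emem[OF k] ev by simp
      then have kk: "k = k'" using same[OF k(1) k'(1) _ emem[OF k']] by simp
      have "\<phi> k v = \<phi> k w" using eq[OF k] eq[OF k'] ev kk by simp
      moreover have "inj_on (\<phi> k) (desc G k)" using pbij k(1) by (simp add: bij_betw_def)
      ultimately show "v = w" using k(2) k'(2) kk unfolding inj_on_def by simp
    qed
  next
    show "e ` verts (induced G (desc_set G K)) \<subseteq> verts B"
    proof
      fix z assume "z \<in> e ` verts (induced G (desc_set G K))"
      then obtain v where v: "v \<in> verts (induced G (desc_set G K))" "z = e v" by auto
      obtain k where k: "k \<in> K" "v \<in> desc G k" using v V by auto
      show "z \<in> verts B" using subsetD[OF desc_sub_verts emem[OF k]] v(2) by simp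
    qed
  next
    fix v w assume v: "v \<in> verts (induced G (desc_set G K))" and w: "w \<in> verts (induced G (desc_set G K))"
    obtain k where k: "k \<in> K" "v \<in> desc G k" using v V by auto
    obtain k' where k': "k' \<in> K" "w \<in> desc G k'" using w V by auto
    have vw: "v \<in> desc_set G K" "w \<in> desc_set G K" using v w by (simp_all add: induced_def verts_def)
    have pk: "\<forall>x\<in>desc G k. \<forall>y\<in>desc G k. (x, y) \<in> edges G \<longleftrightarrow> (\<phi> k x, \<phi> k y) \<in> edges B"
      using ped k(1) by simp
    show "(v, w) \<in> edges (induced G (desc_set G K)) \<longleftrightarrow> (e v, e w) \<in> edges B"
    proof
      assume "(v, w) \<in> edges (induced G (desc_set G K))"
      then have ed: "(v, w) \<in> edges G" using E by simp
      then have "w \<in> verts G" using wfG unfolding wf_digraph_def by auto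
      then have wk: "w \<in> desc G k" using desc_step[OF k(2) ed] by simp
      have "(\<phi> k v, \<phi> k w) \<in> edges B" using pk k(2) wk ed by simp
      then show "(e v, e w) \<in> edges B" using eq[OF k] eq[OF k(1) wk] by simp
    next
      assume ed: "(e v, e w) \<in> edges B"
      then have "e w \<in> verts B" using wfB unfolding wf_digraph_def by auto
      then have "e w \<in> desc B (\<beta> k)" using desc_step[OF emem[OF k] ed] by simp
      then have kk: "k = k'" using same[OF k(1) k'(1) _ emem[OF k']] by simp
      then have wk: "w \<in> desc G k" using k' by simp
      have "(\<phi> k v, \<phi> k w) \<in> edges B" using ed eq[OF k] eq[OF k(1) wk] by simp
      then have "(v, w) \<in> edges G" using pk k(2) wk by simp
      then show "(v, w) \<in> edges (induced G (desc_set G K))" using E vw by simp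
    qed
  qed
  have img: "e ` verts (induced G (desc_set G K)) = desc_set B S"
  proof -
    have ek: "e ` desc G k = desc B (\<beta> k)" if "k \<in> K" for k
    proof -
      have "e ` desc G k = \<phi> k ` desc G k" using eq[OF that] by (auto intro: image_cong)
      then show ?thesis using pbij that by (simp add: bij_betw_def)
    qed
    have "e ` (\<Union>k\<in>K. desc G k) = (\<Union>k\<in>K. e ` desc G k)" by (simp add: image_UN)
    also have "\<dots> = (\<Union>k\<in>K. desc B (\<beta> k))" using ek by simp
    also have "\<dots> = (\<Union>s\<in>\<beta> ` K. desc B s)" by simp
    also have "\<dots> = (\<Union>s\<in>S. desc B s)" using bij by (simp add: bij_betw_def)
    finally show ?thesis using V by (simp add: desc_set_def)
  qed
  have "desc_closed B (desc_set B S)" using desc_closed_desc_set SB .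
  with emb img have "le_embedding (induced G (desc_set G K)) B e"
    unfolding le_embedding_def by simp
  moreover have "\<forall>k\<in>K. e k = \<beta> k"
  proof
    fix k assume k: "k \<in> K"
    then have "k \<in> verts G" using KG by auto
    then have "k \<in> desc G k" by (rule desc_self)
    then show "e k = \<beta> k" using eq[OF k] proot k by simp
  qed
  ultimately show ?thesis by blast
qed



lemma cp_emb:
  assumes "le_embedding B C g" "X \<subseteq> verts B" "P \<subseteq> common_preds B X"
  shows "g ` P \<subseteq> common_preds C (g ` X) \<and> card (g ` P) = card P"
proof -
  have g: "inj_on g (verts B)" "g ` verts B \<subseteq> verts C"
    "\<forall>x\<in>verts B. \<forall>y\<in>verts B. (x, y) \<in> edges B \<longleftrightarrow> (g x, g y) \<in> edges C"
    using assms(1) unfolding le_embedding_def embedding_def by auto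
  have PB: "P \<subseteq> verts B" using assms(3) unfolding common_preds_def by auto
  have "g ` P \<subseteq> common_preds C (g ` X)"
  proof
    fix z assume "z \<in> g ` P"
    then obtain a where a: "a \<in> P" "z = g a" by auto
    have aB: "a \<in> verts B" using PB a(1) by auto
    have ax: "\<forall>x\<in>X. (a, x) \<in> edges B" using assms(3) a(1) unfolding common_preds_def by auto
    have "\<forall>y\<in>g ` X. (g a, y) \<in> edges C"
    proof
      fix y assume "y \<in> g ` X"
      then obtain x where x: "x \<in> X" "y = g x" by auto
      have xB: "x \<in> verts B" using assms(2) x(1) by auto
      have "(a, x) \<in> edges B" using ax x(1) by simp
      then show "(g a, y) \<in> edges C" using g(3) aB xB x(2) by blast
    qed
    moreover have "g a \<in> verts C" using g(2) aB by auto
    ultimately show "z \<in> common_preds C (g ` X)" unfolding common_preds_def using a(2) by simp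
  qed
  moreover have "card (g ` P) = card P" using card_image[OF inj_on_subset[OF g(1) PB]] .
  ultimately show ?thesis by simp
qed

lemma core:
  assumes amal: "le_amalgamation_class D" and inC: "\<forall>G\<in>D. in_C q G" and BD: "B \<in> D"
    and SB: "S \<subseteq> verts B" and finS: "finite S" and cardS: "card S = q"
    and disjS: "\<forall>s\<in>S. \<forall>s'\<in>S. s \<noteq> s' \<longrightarrow> desc B s \<inter> desc B s' = {}"
    and TN: "\<exists>G\<in>D. is_T_n q N G"
  shows "\<exists>C\<in>D. \<exists>g. le_embedding B C g \<and> (\<exists>P. P \<subseteq> common_preds C (g ` S) \<and> card P = N)"
proof -
  obtain G where GD: "G \<in> D" and TG: "is_T_n q N G" using TN by blast
  have N1: "N \<ge> 1" and GC: "in_C q G" and exs: "\<exists>xs. length xs = N \<and> distinct xs \<and> set xs \<subseteq> verts G \<and>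
        desc_set G (set xs) = verts G \<and>
        (\<forall>i<N. \<forall>j<N. desc_n G 1 (xs ! i) = desc_n G 1 (xs ! j))"
    using TG unfolding is_T_n_def by simp_all
  obtain xs where xs: "length xs = N" "distinct xs" "set xs \<subseteq> verts G"
    "\<forall>i<N. \<forall>j<N. desc_n G 1 (xs ! i) = desc_n G 1 (xs ! j)"
    using exs by blast
  have BC: "in_C q B" using inC BD by simp
  have wfG: "wf_digraph G" and isoG: "\<forall>a\<in>verts G. isomorphic (induced G (desc G a)) (T_q q)"
    using GC unfolding in_C_def by auto
  have wfB: "wf_digraph B" and isoB: "\<forall>a\<in>verts B. isomorphic (induced B (desc B a)) (T_q q)"
    using BC unfolding in_C_def by auto
  define x0 where "x0 = xs ! 0"
  have "0 < length xs" using xs(1) N1 by simp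
  then have "xs ! 0 \<in> set xs" by (rule nth_mem)
  then have x0G: "x0 \<in> verts G" using xs(3) unfolding x0_def by auto
  from bchoice[OF isoG[unfolded isomorphic_def]] obtain HG
    where HG: "\<forall>a\<in>verts G. iso_map (induced G (desc G a)) (T_q q) (HG a)" by blast
  from bchoice[OF isoB[unfolded isomorphic_def]] obtain HB
    where HB: "\<forall>a\<in>verts B. iso_map (induced B (desc B a)) (T_q q) (HB a)" by blast
  define K where "K = {y \<in> verts G. (x0, y) \<in> edges G}"
  note cp = children_props[OF HG[rule_format, OF x0G] x0G]
  have finK: "finite K" and cardK: "card K = q" and KX: "K \<subseteq> desc G x0"
    and disjK: "\<forall>k\<in>K. \<forall>k'\<in>K. k \<noteq> k' \<longrightarrow> desc G k \<inter> desc G k' = {}"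
    using cp unfolding K_def by auto
  have KG: "K \<subseteq> verts G" unfolding K_def by auto
  obtain \<beta> where bij: "bij_betw \<beta> K S"
    using finite_same_card_bij[OF finK finS] cardK cardS by auto
  have bS: "\<beta> k \<in> S" if "k \<in> K" for k using bij_betw_apply[OF bij that] .
  define \<phi> where "\<phi> k = inv_into (desc B (\<beta> k)) (HB (\<beta> k)) \<circ> HG k" for k
  have bvB: "\<beta> k \<in> verts B" if "k \<in> K" for k using SB bS[OF that] by auto
  have kvG: "k \<in> verts G" if "k \<in> K" for k using KG that by auto
  have isoGk: "iso_map (induced G (desc G k)) (T_q q) (HG k)" if "k \<in> K" for k
    using HG kvG[OF that] by simp
  have isoBk: "iso_map (induced B (desc B (\<beta> k))) (T_q q) (HB (\<beta> k))" if "k \<in> K" for k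
    using HB bvB[OF that] by simp
  have pbij: "\<forall>k\<in>K. bij_betw (\<phi> k) (desc G k) (desc B (\<beta> k))"
  proof
    fix k assume k: "k \<in> K"
    have b1: "bij_betw (HG k) (desc G k) (verts (T_q q))" using iso_facts(1)[OF isoGk[OF k]] .
    have b2: "bij_betw (HB (\<beta> k)) (desc B (\<beta> k)) (verts (T_q q))" using iso_facts(1)[OF isoBk[OF k]] .
    have b3: "bij_betw (inv_into (desc B (\<beta> k)) (HB (\<beta> k))) (verts (T_q q)) (desc B (\<beta> k))"
      using bij_betw_inv_into[OF b2] .
    show "bij_betw (\<phi> k) (desc G k) (desc B (\<beta> k))" unfolding \<phi>_def using bij_betw_trans[OF b1 b3] .
  qed
  have proot: "\<forall>k\<in>K. \<phi> k k = \<beta> k"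
  proof
    fix k assume k: "k \<in> K"
    have "HG k k = []" using iso_root[OF isoGk[OF k] kvG[OF k]] .
    moreover have "HB (\<beta> k) (\<beta> k) = []" using iso_root[OF isoBk[OF k] bvB[OF k]] .
    moreover have "inj_on (HB (\<beta> k)) (desc B (\<beta> k))"
      using iso_facts(1)[OF isoBk[OF k]] by (simp add: bij_betw_def)
    moreover have "\<beta> k \<in> desc B (\<beta> k)" using bvB[OF k] by (rule desc_self)
    ultimately show "\<phi> k k = \<beta> k" unfolding \<phi>_def by (simp add: inv_into_f_eq)
  qed
  have ped: "\<forall>k\<in>K. \<forall>x\<in>desc G k. \<forall>y\<in>desc G k. (x, y) \<in> edges G \<longleftrightarrow> (\<phi> k x, \<phi> k y) \<in> edges B"
  proof (intro ballI)
    fix k x y assume k: "k \<in> K" and x: "x \<in> desc G k" and y: "y \<in> desc G k"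
    have b1: "bij_betw (HG k) (desc G k) (verts (T_q q))" using iso_facts(1)[OF isoGk[OF k]] .
    have b2: "bij_betw (HB (\<beta> k)) (desc B (\<beta> k)) (verts (T_q q))" using iso_facts(1)[OF isoBk[OF k]] .
    have im: "HB (\<beta> k) ` desc B (\<beta> k) = verts (T_q q)" using b2 by (simp add: bij_betw_def)
    have hx: "HG k x \<in> HB (\<beta> k) ` desc B (\<beta> k)" unfolding im using bij_betw_apply[OF b1 x] .
    have hy: "HG k y \<in> HB (\<beta> k) ` desc B (\<beta> k)" unfolding im using bij_betw_apply[OF b1 y] .
    have px: "\<phi> k x \<in> desc B (\<beta> k)" using bij_betw_apply[OF pbij[rule_format, OF k] x] .
    have py: "\<phi> k y \<in> desc B (\<beta> k)" using bij_betw_apply[OF pbij[rule_format, OF k] y] .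
    have fx: "HB (\<beta> k) (\<phi> k x) = HG k x" unfolding \<phi>_def using f_inv_into_f[OF hx] by simp
    have fy: "HB (\<beta> k) (\<phi> k y) = HG k y" unfolding \<phi>_def using f_inv_into_f[OF hy] by simp
    have "(x, y) \<in> edges G \<longleftrightarrow> (HG k x, HG k y) \<in> edges (T_q q)"
      using iso_facts(2)[OF isoGk[OF k] x y] .
    also have "\<dots> \<longleftrightarrow> (\<phi> k x, \<phi> k y) \<in> edges B"
      using iso_facts(2)[OF isoBk[OF k] px py] fx fy by simp
    finally show "(x, y) \<in> edges G \<longleftrightarrow> (\<phi> k x, \<phi> k y) \<in> edges B" .
  qed
  obtain e where e: "le_embedding (induced G (desc_set G K)) B e" and ek: "\<forall>k\<in>K. e k = \<beta> k"
    using glue[OF wfG wfB KG disjK SB disjS bij pbij proot ped] by blast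
  let ?A = "induced G (desc_set G K)"
  have cl: "\<forall>G\<in>D. \<forall>Z. finite Z \<and> Z \<subseteq> verts G \<longrightarrow> induced G (desc_set G Z) \<in> D"
    using amal unfolding le_amalgamation_class_def by (elim conjE) assumption
  have AD: "?A \<in> D" using cl[rule_format, OF GD conjI[OF finK KG]] .
  have incl: "le_embedding ?A G id" using incl_le_emb[OF desc_closed_desc_set[OF KG]] .
  have "\<forall>A\<in>D. \<forall>B1\<in>D. \<forall>B2\<in>D. \<forall>f1 f2.
        le_embedding A B1 f1 \<and> le_embedding A B2 f2 \<longrightarrow>
        (\<exists>C\<in>D. \<exists>g1 g2. le_embedding B1 C g1 \<and> le_embedding B2 C g2 \<and>
            (\<forall>x\<in>verts A. g1 (f1 x) = g2 (f2 x)))"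
    using amal unfolding le_amalgamation_class_def by (elim conjE) assumption
  note am = this[rule_format, OF AD BD GD conjI[OF e incl]]
  then obtain C g1 g2 where C: "C \<in> D" and g1: "le_embedding B C g1" and g2: "le_embedding G C g2"
    and comm: "\<forall>x\<in>verts ?A. g1 (e x) = g2 (id x)"
    by blast
  have g2e: "inj_on g2 (verts G)" "g2 ` verts G \<subseteq> verts C"
    "\<forall>x\<in>verts G. \<forall>y\<in>verts G. (x, y) \<in> edges G \<longleftrightarrow> (g2 x, g2 y) \<in> edges C"
    using g2 unfolding le_embedding_def embedding_def by auto
  define P where "P = g2 ` set xs"
  have "card P = N" unfolding P_def
    using card_image[OF inj_on_subset[OF g2e(1) xs(3)]] distinct_card[OF xs(2)] xs(1) by simp
  moreover have "P \<subseteq> common_preds C (g1 ` S)"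
  proof
    fix p assume "p \<in> P"
    then obtain x where x: "x \<in> set xs" "p = g2 x" unfolding P_def by auto
    have xG: "x \<in> verts G" using xs(3) x(1) by auto
    obtain i where i0: "i < length xs" "xs ! i = x" using x(1) by (auto simp: in_set_conv_nth)
    then have i: "i < N" "x = xs ! i" using xs(1) by simp_all
    have "0 < N" using N1 by simp
    have "desc_n G 1 x = desc_n G 1 x0" using xs(4)[rule_format, OF i(1) \<open>0 < N\<close>] i(2) unfolding x0_def by simp
    then have dn: "desc_n G 1 x = K" using desc_n1[OF x0G] unfolding K_def by simp
    have "\<forall>z\<in>g1 ` S. (p, z) \<in> edges C"
    proof
      fix z assume "z \<in> g1 ` S"
      then obtain s where s: "s \<in> S" "z = g1 s" by auto
      obtain k where k: "k \<in> K" "s = \<beta> k" using bij s(1) by (metis bij_betw_def imageE)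
      have "k \<in> desc G k" using kvG[OF k(1)] by (rule desc_self)
      then have "k \<in> verts ?A" using k(1) by (auto simp: induced_def verts_def desc_set_def)
      then have "g1 (e k) = g2 k" using comm by simp
      then have zk: "z = g2 k" using ek k s by simp
      have "k \<in> desc_n G 1 x" using dn k(1) by simp
      then have "(x, k) \<in> edges G" using desc_n1[OF xG] by simp
      then show "(p, z) \<in> edges C" using g2e(3) xG kvG[OF k(1)] x(2) zk by simp
    qed
    moreover have "p \<in> verts C" using g2e(2) xG x(2) by auto
    ultimately show "p \<in> common_preds C (g1 ` S)" unfolding common_preds_def by simp
  qed
  ultimately show ?thesis using C g1 by blast
qed



theorem lemma3p3:
  fixes q N :: nat and D :: "nat digraph set" and A :: "nat digraph" and U :: "nat set"
  assumes "q \<ge> 2"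
    and "le_amalgamation_class D"
    and "\<forall>G\<in>D. in_C q G"
    and "A \<in> D"
    and "finite U" and "independent A U"
    and "\<forall>S. S \<subseteq> U \<and> card S = q \<longrightarrow>
           finite (common_preds A S) \<and> card (common_preds A S) \<le> N"
    and "\<exists>G\<in>D. is_T_n q N G"
  shows "\<exists>B\<in>D. \<exists>f. le_embedding A B f \<and>
           (\<forall>S. S \<subseteq> U \<and> card S = q \<longrightarrow>
              (\<exists>P. P \<subseteq> common_preds B (f ` S) \<and> card P = N))"
proof -
  have UA: "U \<subseteq> verts A" and indep: "\<forall>u\<in>U. \<forall>v\<in>U. u \<noteq> v \<longrightarrow> desc A u \<inter> desc A v = {}"
    using assms(6) unfolding independent_def by simp_all
  have claim: "\<exists>B\<in>D. \<exists>f. le_embedding A B f \<and>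
      (\<forall>S\<in>F. \<exists>P. P \<subseteq> common_preds B (f ` S) \<and> card P = N)"
    if "finite F" "F \<subseteq> {S. S \<subseteq> U \<and> card S = q}" for F
    using that
  proof (induction F rule: finite_induct)
    case empty
    show ?case using assms(4) le_emb_id by blast
  next
    case (insert S F)
    then have "F \<subseteq> {S. S \<subseteq> U \<and> card S = q}" by simp
    then obtain B f where BD: "B \<in> D" and f: "le_embedding A B f"
      and old: "\<forall>S\<in>F. \<exists>P. P \<subseteq> common_preds B (f ` S) \<and> card P = N"
      using insert.IH by blast
    have SU: "S \<subseteq> U" "card S = q" using insert.prems by auto
    have fA: "inj_on f (verts A)" "f ` verts A \<subseteq> verts B"
      using f unfolding le_embedding_def embedding_def by auto
    have SA: "S \<subseteq> verts A" using SU(1) UA by (rule subset_trans)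
    have SB: "f ` S \<subseteq> verts B" using image_mono[OF SA] fA(2) by (rule subset_trans)
    have finS: "finite (f ` S)" using finite_subset[OF SU(1) assms(5)] by simp
    have cardS: "card (f ` S) = q" using card_image[OF inj_on_subset[OF fA(1) SA]] SU(2) by simp
    have disjS: "\<forall>s\<in>f ` S. \<forall>s'\<in>f ` S. s \<noteq> s' \<longrightarrow> desc B s \<inter> desc B s' = {}"
    proof (intro ballI impI)
      fix s s' assume s: "s \<in> f ` S" and s': "s' \<in> f ` S" and ne: "s \<noteq> s'"
      obtain u where u: "u \<in> S" "s = f u" using s by auto
      obtain u' where u': "u' \<in> S" "s' = f u'" using s' by auto
      have uu: "u \<noteq> u'" using ne u u' by auto
      have uA: "u \<in> verts A" "u' \<in> verts A" using SA u u' by auto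
      have d: "desc B s = f ` desc A u" "desc B s' = f ` desc A u'"
        using emb_desc[OF f uA(1)] emb_desc[OF f uA(2)] u u' by simp_all
      have "desc A u \<inter> desc A u' = {}" using indep uu u u' SU(1) by auto
      moreover have "f ` (desc A u \<inter> desc A u') = f ` desc A u \<inter> f ` desc A u'"
        using inj_on_image_Int[OF fA(1) desc_sub_verts desc_sub_verts] .
      ultimately show "desc B s \<inter> desc B s' = {}" using d by simp
    qed
    obtain C g P where C: "C \<in> D" and g: "le_embedding B C g"
      and P: "P \<subseteq> common_preds C (g ` f ` S)" "card P = N"
      using core[OF assms(2) assms(3) BD SB finS cardS disjS assms(8)] by blast
    have comp: "le_embedding A C (g \<circ> f)" using le_emb_comp[OF f g] .
    have "\<forall>S'\<in>insert S F. \<exists>P. P \<subseteq> common_preds C ((g \<circ> f) ` S') \<and> card P = N"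
    proof
      fix S' assume S': "S' \<in> insert S F"
      show "\<exists>P. P \<subseteq> common_preds C ((g \<circ> f) ` S') \<and> card P = N"
      proof (cases "S' = S")
        case True
        then show ?thesis using P by (auto simp: image_comp)
      next
        case False
        then have S'F: "S' \<in> F" using S' by simp
        then obtain P1 where P1: "P1 \<subseteq> common_preds B (f ` S')" "card P1 = N" using old by blast
        have "S' \<subseteq> U" using insert.prems S'F by auto
        then have "S' \<subseteq> verts A" using UA by (rule subset_trans)
        then have "f ` S' \<subseteq> verts B" using fA(2) by (auto simp: image_subset_iff)
        from cp_emb[OF g this P1(1)] have "g ` P1 \<subseteq> common_preds C (g ` f ` S')" "card (g ` P1) = N"
          using P1(2) by simp_all
        then show ?thesis by (auto simp: image_comp)
      qed
    qed
    then show ?case using C comp by blast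
  qed
  have "{S. S \<subseteq> U \<and> card S = q} \<subseteq> Pow U" by auto
  moreover have "finite (Pow U)" using assms(5) by simp
  ultimately have "finite {S. S \<subseteq> U \<and> card S = q}" by (rule finite_subset)
  from claim[OF this subset_refl] obtain B f where B: "B \<in> D" "le_embedding A B f"
    "\<forall>S\<in>{S. S \<subseteq> U \<and> card S = q}. \<exists>P. P \<subseteq> common_preds B (f ` S) \<and> card P = N" by blast
  then show ?thesis by auto
qed

end
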